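(* Fix integers $m>1$ and $K>\lfloor m/2\rfloor$. Let $\{z_n\}$ be generated by $\mathcal{S}(\kappa,\Phi)$ with $\kappa$ satisfying $\sum_n\rho^{\kappa(n)}=\infty$ for all $0<\rho\le1$ and $\Phi(x,S)=|V_S(x)|-\operatorname{modefreq}_f(V_S(x))$ with $V_S(x)$ the $K$-nearest neighbors of $x$ with respect to $S$, and let $\zeta_n(x)=\operatorname{mode}_f(U_{Z_n}(x))$ be the $m$ nearest neighbors prediction. If $x\in X$ is contained in an $f$-contiguous component of positive $\mu$-measure, then $\zeta_n(x)\to f(x)$ with probability one.
   Context: $(X,d)$ metric space with probability measure $\mu$; $Y$ countable; $f:X\to Y$; $X_y=f^{-1}(y)$; $\operatorname{supp}(\mu)=\{x:\mu(B_\epsilon(x))>0\ \forall\epsilon>0\}$. $b$ is an $f$-boundary point iff $\mu(B_\epsilon(b)\setminus X_{f(b)})>0$ for all $\epsilon>0$. $R$ is $f$-connected iff connected and contained in some $X_y$; $f$-contiguous iff $f$-connected, contained in $\operatorname{supp}(\mu)$, and with no $f$-boundary points; an $f$-contiguous component is a maximal $f$-contiguous set. $\operatorname{modefreq}_f(A)=\max_y|A\cap X_y|$ ($0$ for empty $A$); $\operatorname{mode}_f(A)$ is a $y$ attaining it (ties uniformly at random). $K$-nearest neighbors: $V_S(x)=\emptyset$ if $x\in S$, otherwise a $K$-element subset of $S$ minimizing distance to $x$, chosen among such to minimize $\operatorname{modefreq}_f$. $m$ nearest neighbors: $U_S(x)=\{x\}$ if $x\in S$, otherwise an $m$-element subset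 of $S$ minimizing distance to $x$, chosen among such to minimize $\operatorname{modefreq}_f$. Process $\mathcal{S}(\kappa,\Phi)$: $Z_0=\emptyset$; at step $n$ draw $\kappa(n)$ candidates i.i.d. from $\mu$, independent of the past; $z_n$ maximizes $\Phi(\cdot,Z_{n-1})$ over candidates (ties uniformly at random); $Z_n=\{z_1,\dots,z_n\}$. *)

theory Defs
  imports "HOL-Probability.Probability"
begin

definition supp_measure :: "'a::metric_space measure \<Rightarrow> 'a set" where
  "supp_measure \<mu> = {x. \<forall>e>0. emeasure \<mu> (ball x e) > 0}"

definition f_boundary_point :: "'a::metric_space measure \<Rightarrow> ('a \<Rightarrow> 'b) \<Rightarrow> 'a \<Rightarrow> bool" where
  "f_boundary_point \<mu> f b \<longleftrightarrow> (\<forall>e>0. emeasure \<mu> (ball b e - f -` {f b}) > 0)"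

definition f_connected :: "('a::metric_space \<Rightarrow> 'b) \<Rightarrow> 'a set \<Rightarrow> bool" where
  "f_connected f R \<longleftrightarrow> connected R \<and> (\<exists>y. R \<subseteq> f -` {y})"

definition f_contiguous :: "'a::metric_space measure \<Rightarrow> ('a \<Rightarrow> 'b) \<Rightarrow> 'a set \<Rightarrow> bool" where
  "f_contiguous \<mu> f R \<longleftrightarrow> f_connected f R \<and> R \<subseteq> supp_measure \<mu>
      \<and> (\<forall>b\<in>R. \<not> f_boundary_point \<mu> f b)"

definition f_contiguous_component :: "'a::metric_space measure \<Rightarrow> ('a \<Rightarrow> 'b) \<Rightarrow> 'a set \<Rightarrow> bool" where
  "f_contiguous_component \<mu> f C \<longleftrightarrow> f_contiguous \<mu> f C
      \<and> (\<forall>R. f_contiguous \<mu> f R \<and> C \<subseteq> R \<longrightarrow> R = C)"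

definition modefreq :: "('a \<Rightarrow> 'b) \<Rightarrow> 'a set \<Rightarrow> nat" where
  "modefreq f A = (if A = {} then 0 else Max ((\<lambda>y. card (A \<inter> f -` {y})) ` (f ` A)))"

text \<open>The set of values attaining the mode frequency (the possible values of mode_f A).\<close>
definition modes :: "('a \<Rightarrow> 'b) \<Rightarrow> 'a set \<Rightarrow> 'b set" where
  "modes f A = {y. card (A \<inter> f -` {y}) = modefreq f A}"

definition nn_sets :: "nat \<Rightarrow> 'a::metric_space set \<Rightarrow> 'a \<Rightarrow> 'a set set" where
  "nn_sets k S x = {V. V \<subseteq> S \<and> card V = min k (card S)
      \<and> (\<forall>v\<in>V. \<forall>s\<in>S - V. dist x v \<le> dist x s)}"

definition knn_sets :: "nat \<Rightarrow> ('a::metric_space \<Rightarrow> 'b) \<Rightarrow> 'a set \<Rightarrow> 'a \<Rightarrow> 'a set set" where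
  "knn_sets k f S x = {V \<in> nn_sets k S x. \<forall>W\<in>nn_sets k S x. modefreq f V \<le> modefreq f W}"

text \<open>K nearest neighbours V_S(x) (an arbitrary admissible choice).\<close>
definition V_nn :: "nat \<Rightarrow> ('a::metric_space \<Rightarrow> 'b) \<Rightarrow> 'a set \<Rightarrow> 'a \<Rightarrow> 'a set" where
  "V_nn K f S x = (if x \<in> S then {} else (SOME V. V \<in> knn_sets K f S x))"

definition Phi_knn :: "nat \<Rightarrow> ('a::metric_space \<Rightarrow> 'b) \<Rightarrow> 'a \<Rightarrow> 'a set \<Rightarrow> real" where
  "Phi_knn K f x S = real (card (V_nn K f S x)) - real (modefreq f (V_nn K f S x))"

definition U_sets :: "nat \<Rightarrow> ('a::metric_space \<Rightarrow> 'b) \<Rightarrow> 'a set \<Rightarrow> 'a \<Rightarrow> 'a set set" where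
  "U_sets m f S x = (if x \<in> S then {{x}} else knn_sets m f S x)"

text \<open>All possible values of the prediction mode_f(U_S(x)), over all admissible
  choices of U_S(x) and all tie-breaks of the mode.\<close>
definition predictions :: "nat \<Rightarrow> ('a::metric_space \<Rightarrow> 'b) \<Rightarrow> 'a set \<Rightarrow> 'a \<Rightarrow> 'b set" where
  "predictions m f S x = (\<Union>U\<in>U_sets m f S x. modes f U)"

text \<open>c n i = (candidate point, auxiliary uniform label) of the i-th candidate at step n.
  Among the candidates maximizing Phi, the one with largest label is taken (this
  realizes uniformly random tie-breaking, since the labels are i.i.d. uniform and
  independent of everything else); remaining (null-probability) ties: smallest index.\<close>
definition select_index ::
  "('a \<Rightarrow> 'a set \<Rightarrow> real) \<Rightarrow> (nat \<Rightarrow> nat) \<Rightarrow> (nat \<Rightarrow> nat \<Rightarrow> 'a \<times> real) \<Rightarrow> nat \<Rightarrow> 'a set \<Rightarrow> nat" where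
  "select_index \<Phi> \<kappa> c n S =
     (let best = {i. i < \<kappa> n \<and> (\<forall>j<\<kappa> n. \<Phi> (fst (c n j)) S \<le> \<Phi> (fst (c n i)) S)};
          top = {i\<in>best. \<forall>j\<in>best. snd (c n j) \<le> snd (c n i)}
      in Min top)"

primrec Zproc ::
  "('a \<Rightarrow> 'a set \<Rightarrow> real) \<Rightarrow> (nat \<Rightarrow> nat) \<Rightarrow> (nat \<Rightarrow> nat \<Rightarrow> 'a \<times> real) \<Rightarrow> nat \<Rightarrow> 'a set" where
  "Zproc \<Phi> \<kappa> c 0 = {}"
| "Zproc \<Phi> \<kappa> c (Suc n) =
     insert (fst (c (Suc n) (select_index \<Phi> \<kappa> c (Suc n) (Zproc \<Phi> \<kappa> c n)))) (Zproc \<Phi> \<kappa> c n)"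

end

theory Submission
  imports Defs
begin



lemma select_index_lt:
  assumes "\<kappa> n \<ge> 1"
  shows "select_index \<Phi> \<kappa> c n S < \<kappa> n"
proof -
  define best where "best = {i. i < \<kappa> n \<and> (\<forall>j<\<kappa> n. \<Phi> (fst (c n j)) S \<le> \<Phi> (fst (c n i)) S)}"
  define top where "top = {i\<in>best. \<forall>j\<in>best. snd (c n j) \<le> snd (c n i)}"
  have fin: "finite best" unfolding best_def by auto
  have ne1: "(\<lambda>j. \<Phi> (fst (c n j)) S) ` {..<\<kappa> n} \<noteq> {}" using assms by (auto simp: lessThan_empty_iff)
  obtain i where i: "i < \<kappa> n" "\<Phi> (fst (c n i)) S = Max ((\<lambda>j. \<Phi> (fst (c n j)) S) ` {..<\<kappa> n})"
    using Max_in[OF _ ne1] by auto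
  have "i \<in> best" unfolding best_def using i by auto
  then have ne2: "(\<lambda>j. snd (c n j)) ` best \<noteq> {}" by auto
  obtain i2 where i2: "i2 \<in> best" "snd (c n i2) = Max ((\<lambda>j. snd (c n j)) ` best)"
    using Max_in[OF _ ne2] fin by auto
  have "i2 \<in> top" unfolding top_def using i2 fin by auto
  then have "Min top \<in> top" using fin by (intro Min_in) (auto simp: top_def)
  then have "Min top < \<kappa> n" unfolding top_def best_def by auto
  then show ?thesis unfolding select_index_def Let_def best_def[symmetric] top_def[symmetric] .
qed

lemma Zproc_finite: "finite (Zproc \<Phi> \<kappa> c n)"
  by (induction n) auto

lemma Zproc_mono: "a \<le> b \<Longrightarrow> Zproc \<Phi> \<kappa> c a \<subseteq> Zproc \<Phi> \<kappa> c b"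
  by (rule lift_Suc_mono_le[of "Zproc \<Phi> \<kappa> c"]) auto

lemma Zproc_points:
  assumes "\<And>n. n \<ge> 1 \<Longrightarrow> \<kappa> n \<ge> 1"
  shows "z \<in> Zproc \<Phi> \<kappa> c N \<Longrightarrow> \<exists>k i. 1 \<le> k \<and> i < \<kappa> k \<and> z = fst (c k i)"
proof (induction N)
  case 0 then show ?case by simp
next
  case (Suc N)
  then show ?case
    using select_index_lt[of \<kappa> "Suc N" \<Phi> c] assms[of "Suc N"] by auto
qed

lemma Zproc_step:
  assumes "\<kappa> (Suc n) \<ge> 1" "\<forall>i<\<kappa> (Suc n). fst (c (Suc n) i) \<in> B"
  shows "\<exists>z\<in>Zproc \<Phi> \<kappa> c (Suc n). z \<in> B"
  using select_index_lt[of \<kappa> "Suc n" \<Phi> c] assms by auto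

lemma nn_sets_ne:
  fixes S :: "'a::metric_space set"
  assumes "finite S"
  shows "nn_sets k S x \<noteq> {}"
proof -
  define F where "F = {V. V \<subseteq> S \<and> card V = min k (card S)}"
  have finF: "finite F" unfolding F_def using assms by (auto intro: finite_subset[of _ "Pow S"])
  obtain V0 where "V0 \<subseteq> S" "card V0 = min k (card S)"
    using obtain_subset_with_card_n[of "min k (card S)" S] by auto
  then have neF: "F \<noteq> {}" unfolding F_def by auto
  define g where "g V = (\<Sum>v\<in>V. dist x v)" for V
  have ne: "g ` F \<noteq> {}" using neF by auto
  obtain V where V: "V \<in> F" "g V = Min (g ` F)"
    using Min_in[OF _ ne] finF by auto
  have gmin: "\<And>W. W \<in> F \<Longrightarrow> g V \<le> g W" using V finF by auto
  have "V \<in> nn_sets k S x"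
    unfolding nn_sets_def
  proof (intro CollectI conjI ballI)
    show "V \<subseteq> S" "card V = min k (card S)" using V(1) unfolding F_def by auto
  next
    fix v s assume v: "v \<in> V" and s: "s \<in> S - V"
    show "dist x v \<le> dist x s"
    proof (rule ccontr)
      assume lt: "\<not> dist x v \<le> dist x s"
      define W where "W = insert s (V - {v})"
      have finV: "finite V" using V(1) assms unfolding F_def by (auto intro: finite_subset)
      have "card W = card V" unfolding W_def using finV v s using card_gt_0_iff[of V] by (simp add: card_Diff_singleton) (metis Suc_pred empty_iff)
      then have "W \<in> F" using V(1) s v unfolding F_def W_def by auto
      moreover have "g W = dist x s + g V - dist x v"
        unfolding W_def g_def using finV v s by (simp add: sum_diff1)
      ultimately show False using gmin lt by fastforce
    qed
  qed
  then show ?thesis by auto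
qed

lemma knn_sets_ne:
  fixes S :: "'a::metric_space set"
  assumes "finite S"
  shows "knn_sets k f S x \<noteq> {}"
proof -
  have fin: "finite (nn_sets k S x)"
    by (rule finite_subset[of _ "Pow S"]) (auto simp: nn_sets_def assms)
  have ne: "(modefreq f) ` nn_sets k S x \<noteq> {}" using nn_sets_ne[OF assms] by auto
  obtain V where "V \<in> nn_sets k S x" "modefreq f V = Min (modefreq f ` nn_sets k S x)"
    using Min_in[OF _ ne] fin by auto
  then have "V \<in> knn_sets k f S x" unfolding knn_sets_def using fin by auto
  then show ?thesis by auto
qed

lemma modes_const:
  assumes "finite U" "U \<noteq> {}" "\<forall>u\<in>U. f u = y0"
  shows "modes f U = {y0}"
proof -
  have "f ` U = {y0}" using assms by auto
  moreover have "U \<inter> f -` {y0} = U" using assms by auto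
  ultimately have mf: "modefreq f U = card U" unfolding modefreq_def using assms by auto
  have "card U > 0" using assms by auto
  moreover have "y \<noteq> y0 \<Longrightarrow> U \<inter> f -` {y} = {}" for y using assms by auto
  ultimately show ?thesis unfolding modes_def mf using \<open>U \<inter> f -` {y0} = U\<close> by force
qed

lemma det_main:
  fixes c :: "nat \<Rightarrow> nat \<Rightarrow> 'a::metric_space \<times> real" and f :: "'a \<Rightarrow> 'b"
  assumes kap: "\<And>n. n \<ge> 1 \<Longrightarrow> \<kappa> n \<ge> 1" and m: "m \<ge> 1" and e0: "e0 > 0"
    and H1: "\<forall>n i. 1 \<le> n \<and> i < \<kappa> n \<longrightarrow> fst (c n i) \<in> ball x e0 \<longrightarrow> f (fst (c n i)) = f x"
    and H2: "\<forall>k N. \<exists>n\<ge>N. \<forall>i<\<kappa> (Suc n). fst (c (Suc n) i) \<in> ball x (e0 / real (Suc k))"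
  shows "eventually (\<lambda>n. predictions m f (Zproc \<Phi> \<kappa> c n) x = {f x}) sequentially"
proof (cases "\<exists>n0. x \<in> Zproc \<Phi> \<kappa> c n0")
  case True
  then obtain n0 where n0: "x \<in> Zproc \<Phi> \<kappa> c n0" by auto
  show ?thesis unfolding eventually_sequentially
  proof (intro exI allI impI)
    fix n assume "n0 \<le> n"
    then have "x \<in> Zproc \<Phi> \<kappa> c n" using Zproc_mono[of n0 n \<Phi> \<kappa> c] n0 by auto
    moreover have "modes f {x} = {f x}" by (rule modes_const) auto
    ultimately show "predictions m f (Zproc \<Phi> \<kappa> c n) x = {f x}"
      unfolding predictions_def U_sets_def by simp
  qed
next
  case False
  let ?Z = "Zproc \<Phi> \<kappa> c"
  define W where "W = (\<Union>n. ?Z n) \<inter> ball x e0"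
  have Wpos: "w \<in> W \<Longrightarrow> dist x w > 0" for w using False unfolding W_def by auto
  have infW: "infinite W"
  proof
    assume finW: "finite W"
    define d where "d = (if W = {} then e0 else min e0 (Min (dist x ` W)))"
    have d: "d > 0" unfolding d_def using e0 finW Wpos by auto
    have dle: "w \<in> W \<Longrightarrow> d \<le> dist x w" for w
    proof -
      assume w: "w \<in> W"
      then have "Min (dist x ` W) \<le> dist x w" using finW by (intro Min_le) auto
      then show ?thesis unfolding d_def using w by auto
    qed
    obtain k where k: "inverse (real (Suc k)) < d / e0"
      using reals_Archimedean[of "d/e0"] d e0 by auto
    have ek: "e0 / real (Suc k) < d" using k e0 by (simp add: field_simps)
    have ek2: "e0 / real (Suc k) \<le> e0" using e0 by (simp add: field_simps)
    obtain n where "\<forall>i<\<kappa> (Suc n). fst (c (Suc n) i) \<in> ball x (e0 / real (Suc k))"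
      using H2 by blast
    then obtain z where z: "z \<in> ?Z (Suc n)" "z \<in> ball x (e0 / real (Suc k))"
      using Zproc_step[of \<kappa> n c "ball x (e0 / real (Suc k))" \<Phi>] kap[of "Suc n"] by auto
    have "z \<in> ball x e0" using z(2) ek2 by simp
    then have "z \<in> W" unfolding W_def using z(1) by blast
    then show False using dle[of z] z(2) ek by auto
  qed
  obtain P where P: "P \<subseteq> W" "finite P" "card P = m"
    using infinite_arbitrarily_large[OF infW] by blast
  have "\<forall>p\<in>P. \<exists>n. p \<in> ?Z n" using P unfolding W_def by auto
  then obtain nf where nf: "\<And>p. p \<in> P \<Longrightarrow> p \<in> ?Z (nf p)" by (rule bchoice[elim_format]) blast
  define N where "N = Max (insert 0 (nf ` P))"
  have PZ: "P \<subseteq> ?Z n" if "n \<ge> N" for n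
  proof
    fix p assume "p \<in> P"
    then have "nf p \<le> N" unfolding N_def using P(2) by auto
    then show "p \<in> ?Z n" using nf[OF \<open>p\<in>P\<close>] Zproc_mono[of "nf p" n \<Phi> \<kappa> c] that by auto
  qed
  show ?thesis unfolding eventually_sequentially
  proof (intro exI allI impI)
    fix n assume nN: "N \<le> n"
    have xn: "x \<notin> ?Z n" using False by auto
    have finZ: "finite (?Z n)" by (rule Zproc_finite)
    have cardZ: "card (?Z n) \<ge> m" using card_mono[OF finZ PZ[OF nN]] P by auto
    have U: "modes f U = {f x}" if "U \<in> knn_sets m f (?Z n) x" for U
    proof -
      have U1: "U \<subseteq> ?Z n" "card U = m" "\<forall>v\<in>U. \<forall>s\<in>?Z n - U. dist x v \<le> dist x s"
        using that cardZ unfolding knn_sets_def nn_sets_def by auto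
      have finU: "finite U" using U1(1) finZ by (auto intro: finite_subset)
      have Uball: "U \<subseteq> ball x e0"
      proof
        fix v assume v: "v \<in> U"
        show "v \<in> ball x e0"
        proof (rule ccontr)
          assume nv: "v \<notin> ball x e0"
          have "P \<subseteq> U"
          proof
            fix p assume p: "p \<in> P"
            show "p \<in> U"
            proof (rule ccontr)
              assume "p \<notin> U"
              then have "dist x v \<le> dist x p" using U1(3) v PZ[OF nN] p by auto
              moreover have "p \<in> ball x e0" using p P(1) unfolding W_def by auto
              ultimately show False using nv by auto
            qed
          qed
          moreover have "v \<notin> P" using nv P(1) unfolding W_def by auto
          ultimately have "insert v P \<subseteq> U" using v by auto
          then have "card (insert v P) \<le> card U" using finU by (rule card_mono[rotated])
          then show False using P \<open>v \<notin> P\<close> U1(2) by auto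
        qed
      qed
      have "\<forall>u\<in>U. f u = f x"
      proof
        fix u assume u: "u \<in> U"
        then obtain k i where "1 \<le> k" "i < \<kappa> k" "u = fst (c k i)"
          using Zproc_points[where \<kappa>=\<kappa> and z=u and N=n and \<Phi>=\<Phi> and c=c, OF kap] U1(1) u by blast
        moreover have "u \<in> ball x e0" using Uball u by blast
        ultimately show "f u = f x" using H1 by simp
      qed
      moreover have "U \<noteq> {}" using U1(2) m by auto
      ultimately show ?thesis using modes_const[of U f "f x"] finU by simp
    qed
    have "knn_sets m f (?Z n) x \<noteq> {}" by (rule knn_sets_ne[OF finZ])
    then show "predictions m f (?Z n) x = {f x}"
      unfolding predictions_def U_sets_def using xn U by auto
  qed
qed



lemma cand_basic:
  fixes cand :: "nat \<Rightarrow> nat \<Rightarrow> 'w \<Rightarrow> 'a::metric_space \<times> real" and \<mu> :: "'a measure"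
  assumes M: "prob_space M"
    and ind: "prob_space.indep_vars M (\<lambda>_. \<mu> \<Otimes>\<^sub>M U) (\<lambda>(n, i). cand n i) {(n, i). 1 \<le> n \<and> i < \<kappa> n}"
    and dist: "\<And>n i. 1 \<le> n \<Longrightarrow> i < \<kappa> n \<Longrightarrow> distr M (\<mu> \<Otimes>\<^sub>M U) (cand n i) = \<mu> \<Otimes>\<^sub>M U"
    and U: "prob_space U"
    and ni: "1 \<le> n" "i < \<kappa> n"
  shows "cand n i \<in> measurable M (\<mu> \<Otimes>\<^sub>M U)"
    and "A \<in> sets \<mu> \<Longrightarrow> emeasure M (cand n i -` (A \<times> space U) \<inter> space M) = emeasure \<mu> A"
proof -
  interpret prob_space M by fact
  show meas: "cand n i \<in> measurable M (\<mu> \<Otimes>\<^sub>M U)"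
    using ind ni unfolding indep_vars_def2 by auto
  assume A: "A \<in> sets \<mu>"
  have AU: "A \<times> space U \<in> sets (\<mu> \<Otimes>\<^sub>M U)" using A by (intro pair_measureI) auto
  have "emeasure M (cand n i -` (A \<times> space U) \<inter> space M) = emeasure (distr M (\<mu> \<Otimes>\<^sub>M U) (cand n i)) (A \<times> space U)"
    by (rule emeasure_distr[OF meas AU, symmetric])
  also have "\<dots> = emeasure (\<mu> \<Otimes>\<^sub>M U) (A \<times> space U)" using dist[OF ni] by simp
  also have "\<dots> = emeasure \<mu> A * emeasure U (space U)"
    using sigma_finite_measure.emeasure_pair_measure_Times[OF prob_space_imp_sigma_finite[OF U] A, of "space U"]
    by simp
  also have "\<dots> = emeasure \<mu> A" using prob_space.emeasure_space_1[OF U] by simp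
  finally show "emeasure M (cand n i -` (A \<times> space U) \<inter> space M) = emeasure \<mu> A" .
qed

lemma null_part:
  fixes cand :: "nat \<Rightarrow> nat \<Rightarrow> 'w \<Rightarrow> 'a::metric_space \<times> real" and \<mu> :: "'a measure"
  assumes M: "prob_space M"
    and ind: "prob_space.indep_vars M (\<lambda>_. \<mu> \<Otimes>\<^sub>M U) (\<lambda>(n, i). cand n i) {(n, i). 1 \<le> n \<and> i < \<kappa> n}"
    and dist: "\<And>n i. 1 \<le> n \<Longrightarrow> i < \<kappa> n \<Longrightarrow> distr M (\<mu> \<Otimes>\<^sub>M U) (cand n i) = \<mu> \<Otimes>\<^sub>M U"
    and U: "prob_space U"
    and N: "Nn \<in> sets \<mu>" "emeasure \<mu> Nn = 0"
  shows "AE \<omega> in M. \<forall>n i. 1 \<le> n \<and> i < \<kappa> n \<longrightarrow> fst (cand n i \<omega>) \<notin> Nn"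
proof -
  have "AE \<omega> in M. 1 \<le> n \<and> i < \<kappa> n \<longrightarrow> fst (cand n i \<omega>) \<notin> Nn" for n i
  proof (rule AE_impI)
    assume ni: "1 \<le> n \<and> i < \<kappa> n"
    note cb = cand_basic[OF M ind dist U, of n i]
    have meas: "cand n i \<in> measurable M (\<mu> \<Otimes>\<^sub>M U)" using cb ni by auto
    have AU: "Nn \<times> space U \<in> sets (\<mu> \<Otimes>\<^sub>M U)" using N by (intro pair_measureI) auto
    have "cand n i -` (Nn \<times> space U) \<inter> space M \<in> null_sets M"
      using cb(2)[of Nn] ni N measurable_sets[OF meas AU] by auto
    moreover have "{\<omega>\<in>space M. \<not> fst (cand n i \<omega>) \<notin> Nn} \<subseteq> cand n i -` (Nn \<times> space U) \<inter> space M"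
      using measurable_space[OF meas] by (auto simp: space_pair_measure mem_Times_iff)
    ultimately show "AE \<omega> in M. fst (cand n i \<omega>) \<notin> Nn" by (rule AE_I')
  qed
  then show ?thesis by (simp add: AE_all_countable)
qed

lemma freq_part:
  fixes cand :: "nat \<Rightarrow> nat \<Rightarrow> 'w \<Rightarrow> 'a::metric_space \<times> real" and \<mu> :: "'a measure"
  assumes M: "prob_space M"
    and ind: "prob_space.indep_vars M (\<lambda>_. \<mu> \<Otimes>\<^sub>M U) (\<lambda>(n, i). cand n i) {(n, i). 1 \<le> n \<and> i < \<kappa> n}"
    and dist: "\<And>n i. 1 \<le> n \<Longrightarrow> i < \<kappa> n \<Longrightarrow> distr M (\<mu> \<Otimes>\<^sub>M U) (cand n i) = \<mu> \<Otimes>\<^sub>M U"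
    and U: "prob_space U" and mu: "prob_space \<mu>"
    and kap: "\<And>n. n \<ge> 1 \<Longrightarrow> \<kappa> n \<ge> 1"
    and summ: "\<And>\<rho>::real. 0 < \<rho> \<Longrightarrow> \<rho> \<le> 1 \<Longrightarrow> \<not> summable (\<lambda>n. \<rho> ^ \<kappa> n)"
    and B: "B \<in> sets \<mu>" "measure \<mu> B > 0"
  shows "AE \<omega> in M. \<forall>N. \<exists>n\<ge>N. \<forall>i<\<kappa> (Suc n). fst (cand (Suc n) i \<omega>) \<in> B"
proof -
  interpret prob_space M by fact
  define \<rho> where "\<rho> = measure \<mu> B"
  have \<rho>: "0 < \<rho>" "\<rho> \<le> 1" unfolding \<rho>_def using B prob_space.prob_le_1[OF mu] by auto
  define X where "X = (\<lambda>(n, i). cand n i)"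
  define I where "I = {(n, i). 1 \<le> n \<and> i < \<kappa> n}"
  define G where "G = (\<lambda>j. {X j -` S \<inter> space M | S. S \<in> sets (\<mu> \<Otimes>\<^sub>M U)})"
  have indG: "indep_sets G I" using ind unfolding indep_vars_def2 G_def X_def I_def by auto
  define Ij where "Ij = (\<lambda>n::nat. {(n, i) | i. i < \<kappa> n})"
  have Iunion: "I = (\<Union>n\<in>{1..}. Ij n)" unfolding I_def Ij_def by auto
  have Gstab: "Int_stable (G j)" for j
    unfolding Int_stable_def G_def
  proof (intro ballI)
    fix a b assume "a \<in> {X j -` S \<inter> space M | S. S \<in> sets (\<mu> \<Otimes>\<^sub>M U)}"
      "b \<in> {X j -` S \<inter> space M | S. S \<in> sets (\<mu> \<Otimes>\<^sub>M U)}"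
    then obtain S T where "a = X j -` S \<inter> space M" "S \<in> sets (\<mu> \<Otimes>\<^sub>M U)"
      "b = X j -` T \<inter> space M" "T \<in> sets (\<mu> \<Otimes>\<^sub>M U)" by auto
    then show "a \<inter> b \<in> {X j -` S \<inter> space M | S. S \<in> sets (\<mu> \<Otimes>\<^sub>M U)}"
      by (intro CollectI exI[of _ "S \<inter> T"]) auto
  qed
  have disj: "disjoint_family_on Ij {1..}" unfolding disjoint_family_on_def Ij_def by auto
  define H where "H = (\<lambda>n. sigma_sets (space M) (\<Union>j\<in>Ij n. G j))"
  have indH: "indep_sets H {1..}"
    unfolding H_def by (rule indep_sets_collect_sigma) (use indG Iunion Gstab disj in auto)
  define E where "E = (\<lambda>n. space M - {\<omega>\<in>space M. \<forall>i<\<kappa> n. fst (cand n i \<omega>) \<in> B})"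
  define gen where "gen = (\<lambda>n i. cand n i -` (B \<times> space U) \<inter> space M)"
  have BU: "B \<times> space U \<in> sets (\<mu> \<Otimes>\<^sub>M U)" using B by (intro pair_measureI) auto
  have gen_eq: "{\<omega>\<in>space M. \<forall>i<\<kappa> n. fst (cand n i \<omega>) \<in> B} = (\<Inter>i<\<kappa> n. gen n i)" if n: "n \<ge> 1" for n
  proof -
    have "\<kappa> n \<ge> 1" using kap n by auto
    moreover have "cand n i \<omega> \<in> space (\<mu> \<Otimes>\<^sub>M U)" if "i < \<kappa> n" "\<omega> \<in> space M" for i \<omega>
      using measurable_space[OF cand_basic(1)[OF M ind dist U n that(1)] that(2)] .
    ultimately show ?thesis unfolding gen_def
      by (auto simp: space_pair_measure mem_Times_iff lessThan_empty_iff)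
  qed
  have genG: "gen n i \<in> G (n, i)" if "n \<ge> 1" "i < \<kappa> n" for n i
    unfolding gen_def G_def X_def using BU by auto
  have prob_gen: "prob (gen n i) = \<rho>" if "n \<ge> 1" "i < \<kappa> n" for n i
  proof -
    have "emeasure M (gen n i) = emeasure \<mu> B"
      unfolding gen_def by (rule cand_basic(2)[OF M ind dist U that B(1)])
    then show ?thesis unfolding \<rho>_def measure_def by simp
  qed
  have EH: "E n \<in> H n" if n: "n \<ge> 1" for n
  proof -
    have sub: "(\<Union>j\<in>Ij n. G j) \<subseteq> Pow (space M)" unfolding G_def by auto
    interpret S: sigma_algebra "space M" "H n" unfolding H_def by (rule sigma_algebra_sigma_sets[OF sub])
    have "gen n i \<in> H n" if "i < \<kappa> n" for i
      unfolding H_def using genG[OF n that] that by (intro sigma_sets.Basic) (auto simp: Ij_def)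
    moreover have "\<kappa> n \<noteq> 0" using kap n by fastforce
    ultimately have "(\<Inter>i<\<kappa> n. gen n i) \<in> H n" by (intro S.finite_INT) auto
    then show ?thesis unfolding E_def gen_eq[OF n] by auto
  qed
  have Eev: "E n \<in> events" if "n \<ge> 1" for n
    using indH EH[OF that] that unfolding indep_sets_def by auto
  have probE: "prob (E n) = 1 - \<rho> ^ \<kappa> n" if n: "n \<ge> 1" for n
  proof -
    have kn: "\<kappa> n \<noteq> 0" using kap n by fastforce
    have Ijsub: "Ij n \<subseteq> I" unfolding Ij_def I_def using n by auto
    have Ijne: "Ij n \<noteq> {}" unfolding Ij_def using kn by auto
    have Ijfin: "finite (Ij n)" unfolding Ij_def by auto
    have "prob (\<Inter>j\<in>Ij n. gen (fst j) (snd j)) = (\<Prod>j\<in>Ij n. prob (gen (fst j) (snd j)))"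
      by (rule indep_setsD[OF indG Ijsub Ijne Ijfin]) (use n in \<open>auto simp: Ij_def intro!: genG\<close>)
    also have "\<dots> = (\<Prod>j\<in>Ij n. \<rho>)" by (intro prod.cong) (use n in \<open>auto simp: Ij_def intro!: prob_gen\<close>)
    also have "\<dots> = \<rho> ^ \<kappa> n"
    proof -
      have "Ij n = (\<lambda>i. (n, i)) ` {..<\<kappa> n}" unfolding Ij_def by auto
      then have "card (Ij n) = \<kappa> n" by (simp add: card_image inj_on_def)
      then show ?thesis by simp
    qed
    finally have p1: "prob (\<Inter>j\<in>Ij n. gen (fst j) (snd j)) = \<rho> ^ \<kappa> n" .
    have "(\<Inter>j\<in>Ij n. gen (fst j) (snd j)) = (\<Inter>i<\<kappa> n. gen n i)" unfolding Ij_def by auto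
    then have pA: "prob {\<omega>\<in>space M. \<forall>i<\<kappa> n. fst (cand n i \<omega>) \<in> B} = \<rho> ^ \<kappa> n"
      using p1 gen_eq[OF n] by simp
    have Aev: "{\<omega>\<in>space M. \<forall>i<\<kappa> n. fst (cand n i \<omega>) \<in> B} \<in> events"
    proof -
      have "space M - E n \<in> events" using Eev[OF n] by (rule sets.compl_sets)
      moreover have "space M - E n = {\<omega>\<in>space M. \<forall>i<\<kappa> n. fst (cand n i \<omega>) \<in> B}" unfolding E_def by blast
      ultimately show ?thesis by (rule back_subst)
    qed
    show ?thesis unfolding E_def prob_compl[OF Aev] pA by (rule refl)
  qed
  have div: "\<exists>L>N. (\<Sum>n\<in>{N..<L}. \<rho> ^ \<kappa> n) \<ge> c" for N c
  proof (rule ccontr)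
    assume "\<not> ?thesis"
    then have le: "\<And>L. L > N \<Longrightarrow> (\<Sum>n\<in>{N..<L}. \<rho> ^ \<kappa> n) < c" by (meson not_le)
    have "summable (\<lambda>n. \<rho> ^ \<kappa> n)"
    proof (rule summableI_nonneg_bounded[where x = "(\<Sum>n<N. \<rho> ^ \<kappa> n) + \<bar>c\<bar>"])
      fix L
      show "(\<Sum>i<L. \<rho> ^ \<kappa> i) \<le> (\<Sum>n<N. \<rho> ^ \<kappa> n) + \<bar>c\<bar>"
      proof (cases "L > N")
        case True
        have "(\<Sum>i<L. \<rho> ^ \<kappa> i) = (\<Sum>n<N. \<rho> ^ \<kappa> n) + (\<Sum>n\<in>{N..<L}. \<rho> ^ \<kappa> n)"
          using True by (simp add: lessThan_atLeast0 sum.atLeastLessThan_concat)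
        then show ?thesis using le[OF True] by linarith
      next
        case False
        then have "(\<Sum>i<L. \<rho> ^ \<kappa> i) \<le> (\<Sum>n<N. \<rho> ^ \<kappa> n)"
          using \<rho> by (intro sum_mono2) auto
        then show ?thesis by linarith
      qed
    qed (use \<rho> in auto)
    then show False using summ[OF \<rho>] by simp
  qed
  have null: "space M - (\<Union>n\<in>{N..}. (space M - E n)) \<in> null_sets M" if N: "N \<ge> 1" for N
  proof -
    define D where "D = space M - (\<Union>n\<in>{N..}. (space M - E n))"
    have Dev: "D \<in> events" unfolding D_def using Eev N by (intro sets.Diff sets.countable_UN'') auto
    have bound: "prob D \<le> exp (- c)" for c
    proof -
      obtain L where L: "L > N" "(\<Sum>n\<in>{N..<L}. \<rho> ^ \<kappa> n) \<ge> c" using div by blast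
      have "D \<subseteq> (\<Inter>n\<in>{N..<L}. E n)" unfolding D_def using L E_def by auto
      then have "prob D \<le> prob (\<Inter>n\<in>{N..<L}. E n)"
        using Eev N L by (intro finite_measure_mono) (auto intro!: sets.finite_INT)
      also have "\<dots> = (\<Prod>n\<in>{N..<L}. prob (E n))"
        using L N by (intro indep_setsD[OF indH]) (auto intro!: EH)
      also have "\<dots> = (\<Prod>n\<in>{N..<L}. 1 - \<rho> ^ \<kappa> n)"
        using N by (intro prod.cong) (auto intro!: probE)
      also have "\<dots> \<le> (\<Prod>n\<in>{N..<L}. exp (- (\<rho> ^ \<kappa> n)))"
      proof (intro prod_mono conjI)
        fix n
        show "0 \<le> 1 - \<rho> ^ \<kappa> n" using \<rho> by (simp add: power_le_one)
        show "1 - \<rho> ^ \<kappa> n \<le> exp (- (\<rho> ^ \<kappa> n))" using exp_ge_add_one_self[of "- (\<rho> ^ \<kappa> n)"] by simp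
      qed
      also have "\<dots> = exp (- (\<Sum>n\<in>{N..<L}. \<rho> ^ \<kappa> n))"
        by (simp add: exp_sum[symmetric] sum_negf)
      also have "\<dots> \<le> exp (- c)" using L by simp
      finally show ?thesis .
    qed
    have "prob D \<le> 0"
    proof (rule ccontr)
      assume "\<not> prob D \<le> 0"
      then have pos: "prob D > 0" by simp
      have "prob D \<le> exp (- (1 - ln (prob D)))" by (rule bound)
      also have "\<dots> = prob D * exp (-1)" using pos by (simp add: exp_diff exp_minus field_simps)
      also have "\<dots> < prob D" using pos by simp
      finally show False by simp
    qed
    then have "prob D = 0" using measure_nonneg[of M D] by linarith
    then show ?thesis using Dev unfolding D_def[symmetric] by (simp add: emeasure_eq_measure null_sets_def)
  qed
  have "AE \<omega> in M. \<exists>n\<ge>N. \<forall>i<\<kappa> (Suc n). fst (cand (Suc n) i \<omega>) \<in> B" for N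
  proof (rule AE_I'[OF null[of "Suc N"]])
    show "{\<omega> \<in> space M. \<not> (\<exists>n\<ge>N. \<forall>i<\<kappa> (Suc n). fst (cand (Suc n) i \<omega>) \<in> B)}
      \<subseteq> space M - (\<Union>n\<in>{Suc N..}. space M - E n)"
    proof (intro subsetI)
      fix \<omega> assume w: "\<omega> \<in> {\<omega> \<in> space M. \<not> (\<exists>n\<ge>N. \<forall>i<\<kappa> (Suc n). fst (cand (Suc n) i \<omega>) \<in> B)}"
      have "\<omega> \<in> E n" if nN: "n \<in> {Suc N..}" for n
      proof -
        obtain n' where n': "n = Suc n'" "n' \<ge> N" using nN by (cases n) auto
        show ?thesis using w unfolding E_def n'(1) using n'(2) by auto
      qed
      then show "\<omega> \<in> space M - (\<Union>n\<in>{Suc N..}. space M - E n)" using w by auto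
    qed
  qed simp
  then show ?thesis by (simp add: AE_all_countable)
qed


theorem mainTheorem12:
  fixes \<mu> :: "'a::metric_space measure"
    and f :: "'a \<Rightarrow> 'b::countable"
    and M :: "'w measure"
    and cand :: "nat \<Rightarrow> nat \<Rightarrow> 'w \<Rightarrow> 'a \<times> real"
    and \<kappa> :: "nat \<Rightarrow> nat"
    and m K :: nat
    and x :: 'a
    and C :: "'a set"
  assumes "prob_space \<mu>" and "sets \<mu> = sets borel"
    and "\<And>y. f -` {y} \<in> sets \<mu>"
    and "m > 1" and "K > m div 2"
    and "\<And>n. n \<ge> 1 \<Longrightarrow> \<kappa> n \<ge> 1"
    and "\<And>\<rho>::real. 0 < \<rho> \<Longrightarrow> \<rho> \<le> 1 \<Longrightarrow> \<not> summable (\<lambda>n. \<rho> ^ \<kappa> n)"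
    and "prob_space M"
    and "prob_space.indep_vars M (\<lambda>_. \<mu> \<Otimes>\<^sub>M uniform_measure lborel {0..1})
           (\<lambda>(n, i). cand n i) {(n, i). 1 \<le> n \<and> i < \<kappa> n}"
    and "\<And>n i. 1 \<le> n \<Longrightarrow> i < \<kappa> n \<Longrightarrow>
           distr M (\<mu> \<Otimes>\<^sub>M uniform_measure lborel {0..1}) (cand n i)
             = \<mu> \<Otimes>\<^sub>M uniform_measure lborel {0..1}"
    and "f_contiguous_component \<mu> f C" and "C \<in> sets \<mu>" and "emeasure \<mu> C > 0"
    and "x \<in> C"
  shows "AE \<omega> in M. eventually (\<lambda>n.
           predictions m f (Zproc (Phi_knn K f) \<kappa> (\<lambda>n i. cand n i \<omega>) n) x = {f x}) sequentially"
proof -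
  note mu = assms(1) and sets_mu = assms(2) and fpre = assms(3)
  note kap = assms(6) and summ = assms(7) and M = assms(8) and ind = assms(9) and dist = assms(10)
  have U: "prob_space (uniform_measure lborel {0..1::real})"
    by (rule prob_space_uniform_measure) auto
  interpret mu: prob_space \<mu> by (rule mu)
  have xsupp: "x \<in> supp_measure \<mu>" and nb: "\<not> f_boundary_point \<mu> f x"
    using assms(11,14) unfolding f_contiguous_component_def f_contiguous_def by auto
  obtain e0 where e0: "e0 > 0" "\<not> emeasure \<mu> (ball x e0 - f -` {f x}) > 0"
    using nb unfolding f_boundary_point_def by auto
  have ballS: "ball y r \<in> sets \<mu>" for y r using sets_mu by simp
  have Nn: "ball x e0 - f -` {f x} \<in> sets \<mu>" using ballS fpre by auto
  have Nn0: "emeasure \<mu> (ball x e0 - f -` {f x}) = 0" using e0(2) by (simp add: not_gr_zero)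
  have A1: "AE \<omega> in M. \<forall>n i. 1 \<le> n \<and> i < \<kappa> n \<longrightarrow> fst (cand n i \<omega>) \<notin> ball x e0 - f -` {f x}"
    by (rule null_part[OF M ind dist U Nn Nn0])
  have A2: "AE \<omega> in M. \<forall>N. \<exists>n\<ge>N. \<forall>i<\<kappa> (Suc n). fst (cand (Suc n) i \<omega>) \<in> ball x (e0 / real (Suc k))" for k
  proof (rule freq_part[OF M ind dist U mu kap summ])
    show "ball x (e0 / real (Suc k)) \<in> sets \<mu>" by (rule ballS)
    have "emeasure \<mu> (ball x (e0 / real (Suc k))) > 0"
      using xsupp e0(1) unfolding supp_measure_def by auto
    then show "measure \<mu> (ball x (e0 / real (Suc k))) > 0"
      using mu.emeasure_eq_measure by simp
  qed
  have A2': "AE \<omega> in M. \<forall>k N. \<exists>n\<ge>N. \<forall>i<\<kappa> (Suc n). fst (cand (Suc n) i \<omega>) \<in> ball x (e0 / real (Suc k))"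
    using A2 by (simp add: AE_all_countable)
  show ?thesis
  proof (rule AE_mp[OF AE_conjI[OF A1 A2']], rule AE_I2, intro impI)
    fix \<omega> assume H: "(\<forall>n i. 1 \<le> n \<and> i < \<kappa> n \<longrightarrow> fst (cand n i \<omega>) \<notin> ball x e0 - f -` {f x}) \<and>
      (\<forall>k N. \<exists>n\<ge>N. \<forall>i<\<kappa> (Suc n). fst (cand (Suc n) i \<omega>) \<in> ball x (e0 / real (Suc k)))"
    show "eventually (\<lambda>n. predictions m f (Zproc (Phi_knn K f) \<kappa> (\<lambda>n i. cand n i \<omega>) n) x = {f x}) sequentially"
    proof (rule det_main[where c = "\<lambda>n i. cand n i \<omega>"])
      show "\<And>n. n \<ge> 1 \<Longrightarrow> \<kappa> n \<ge> 1" by (rule kap)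
      show "m \<ge> 1" using assms(4) by simp
      show "e0 > 0" by (rule e0(1))
      show "\<forall>n i. 1 \<le> n \<and> i < \<kappa> n \<longrightarrow> fst (cand n i \<omega>) \<in> ball x e0 \<longrightarrow> f (fst (cand n i \<omega>)) = f x"
        using H by blast
      show "\<forall>k N. \<exists>n\<ge>N. \<forall>i<\<kappa> (Suc n). fst (cand (Suc n) i \<omega>) \<in> ball x (e0 / real (Suc k))"
        using H by blast
    qed
  qed
qed

end
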